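(* Let $E$ be a nonzero real Banach space, $S\colon E\rightrightarrows E^*$ be closed, monotone and quasidense, $\{(s_\beta,s_\beta^* )\}$ be a bounded net of elements of $G(S)$ and $(z,z^* )\in E\times E^*$. (a) If $s_\beta\to z$ in norm and $s_\beta^*\to z^*$ in $w(E^*,E)$, then $(z,z^* )\in G(S)$. (b) If $s_\beta\to z$ in $w(E,E^* )$ and $s_\beta^*\to z^*$ in norm, then $(z,z^* )\in G(S)$.
   Context: For a multifunction $S\colon E\rightrightarrows E^*$ with nonempty graph $G(S)$: closed means $G(S)$ norm-closed; monotone means $\langle s-t,s^*-t^*\rangle\ge0$ on $G(S)$; quasidense means for every $(x,x^* )\in E\times E^*$, $\inf_{(s,s^* )\in G(S)}[\tfrac12\|s-x\|^2+\tfrac12\|s^*-x^*\|^2+\langle s-x,s^*-x^*\rangle]\le0$. *)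

theory Defs
  imports "HOL-Analysis.Analysis"
begin

text \<open>The dual space E* is modelled as the Banach space of bounded linear
functionals E \<Rightarrow>L real; a multifunction S is identified with its graph
G :: (E \<times> E*) set.\<close>

definition closed_mf :: "('a::real_normed_vector \<times> ('a \<Rightarrow>\<^sub>L real)) set \<Rightarrow> bool" where
  "closed_mf G \<longleftrightarrow> closed G"

definition monotone_mf :: "('a::real_normed_vector \<times> ('a \<Rightarrow>\<^sub>L real)) set \<Rightarrow> bool" where
  "monotone_mf G \<longleftrightarrow>
     (\<forall>s s' t t'. (s, s') \<in> G \<longrightarrow> (t, t') \<in> G \<longrightarrow> 0 \<le> blinfun_apply (s' - t') (s - t))"

definition quasidense_mf :: "('a::real_normed_vector \<times> ('a \<Rightarrow>\<^sub>L real)) set \<Rightarrow> bool" where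
  "quasidense_mf G \<longleftrightarrow>
     (\<forall>x x'. Inf ((\<lambda>(s, s'). (1/2) * (norm (s - x))\<^sup>2 + (1/2) * (norm (s' - x'))\<^sup>2
                         + blinfun_apply (s' - x') (s - x)) ` G) \<le> 0)"

text \<open>Nets: indexed by a type 'i carrying a directed preorder le.\<close>

definition directed_preorder :: "('i \<Rightarrow> 'i \<Rightarrow> bool) \<Rightarrow> bool" where
  "directed_preorder le \<longleftrightarrow> (\<forall>a. le a a) \<and> (\<forall>a b c. le a b \<longrightarrow> le b c \<longrightarrow> le a c)
     \<and> (\<forall>a b. \<exists>c. le a c \<and> le b c)"

text \<open>The filter of tails of the directed set; convergence of a net
f along le to l is (f \<longlongrightarrow> l) (net_filter le).\<close>

definition net_filter :: "('i \<Rightarrow> 'i \<Rightarrow> bool) \<Rightarrow> 'i filter" where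
  "net_filter le = (INF a. principal {b. le a b})"

end

theory Submission
  imports Defs
begin

lemma maximal_lemma:
  fixes G :: "('a::real_normed_vector \<times> ('a \<Rightarrow>\<^sub>L real)) set"
  assumes cl: "closed G" and qd: "quasidense_mf G" and ne: "G \<noteq> {}"
    and rel: "\<And>t t'. (t, t') \<in> G \<Longrightarrow> 0 \<le> blinfun_apply (t' - x') (t - x)"
  shows "(x, x') \<in> G"
proof -
  define f where "f = (\<lambda>(s::'a, s'::'a \<Rightarrow>\<^sub>L real). (1/2) * (norm (s - x))\<^sup>2 + (1/2) * (norm (s' - x'))\<^sup>2
                         + blinfun_apply (s' - x') (s - x))"
  have inf: "Inf (f ` G) \<le> 0" using qd[unfolded quasidense_mf_def, rule_format, of x x'] unfolding f_def .
  have ne2: "f ` G \<noteq> {}" using ne by simp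
  have "\<exists>y\<in>G. dist y (x, x') < e" if e: "e > 0" for e
  proof -
    have "e^2/2 > 0" using e by simp
    hence "Inf (f ` G) < e^2/2" using inf by linarith
    then obtain y where y: "y \<in> f ` G" "y < e^2/2" using cInf_lessD[OF ne2] by blast
    then obtain s s' where G: "(s, s') \<in> G" and fy: "y = f (s, s')" by auto
    have r: "0 \<le> blinfun_apply (s' - x') (s - x)" using rel G by blast
    have "f (s, s') = (1/2) * (norm (s - x))\<^sup>2 + (1/2) * (norm (s' - x'))\<^sup>2
                         + blinfun_apply (s' - x') (s - x)" unfolding f_def by simp
    hence "(norm (s - x))\<^sup>2 + (norm (s' - x'))\<^sup>2 < e^2" using y(2) fy r by linarith
    hence "(dist s x)\<^sup>2 + (dist s' x')\<^sup>2 < e^2" by (simp only: dist_norm)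
    hence "sqrt ((dist s x)\<^sup>2 + (dist s' x')\<^sup>2) < sqrt (e^2)"
      using real_sqrt_less_mono by blast
    hence "dist (s, s') (x, x') < e" using e by (simp add: dist_Pair_Pair)
    thus ?thesis using G by blast
  qed
  thus ?thesis using closed_approachable[OF cl] by blast
qed

lemma net_eventually:
  assumes dir: "directed_preorder le"
  shows "eventually P (net_filter le) \<longleftrightarrow> (\<exists>a. \<forall>b. le a b \<longrightarrow> P b)"
proof -
  have "eventually P (INF a\<in>UNIV. principal {b. le a b}) \<longleftrightarrow> (\<exists>a\<in>UNIV. eventually P (principal {b. le a b}))"
  proof (rule eventually_INF_base)
    fix a b assume "a \<in> (UNIV::'a set)" "b \<in> (UNIV::'a set)"
    have tr: "\<And>a b c. le a b \<Longrightarrow> le b c \<Longrightarrow> le a c"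
      using dir unfolding directed_preorder_def by metis
    obtain c where "le a c" "le b c" using dir unfolding directed_preorder_def by metis
    hence "{x. le c x} \<subseteq> {x. le a x} \<inter> {x. le b x}" using tr by blast
    hence "principal {x. le c x} \<le> inf (principal {x. le a x}) (principal {x. le b x})"
      by (simp add: inf_principal)
    thus "\<exists>x\<in>UNIV. principal {y. le x y} \<le> inf (principal {y. le a y}) (principal {y. le b y})" by blast
  qed simp
  thus ?thesis unfolding net_filter_def eventually_principal by simp
qed

lemma net_nontriv:
  assumes dir: "directed_preorder le"
  shows "net_filter le \<noteq> bot"
proof
  assume "net_filter le = bot"
  hence "eventually (\<lambda>_. False) (net_filter le)" by simp
  then obtain a where "\<forall>b. le a b \<longrightarrow> False" using net_eventually[OF dir, of "\<lambda>_. False"] by auto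
  moreover have "le a a" using dir unfolding directed_preorder_def by simp
  ultimately show False by blast
qed

theorem lemma6p3:
  fixes G :: "('a::banach \<times> ('a \<Rightarrow>\<^sub>L real)) set"
    and le :: "'i \<Rightarrow> 'i \<Rightarrow> bool"
    and s :: "'i \<Rightarrow> 'a" and s' :: "'i \<Rightarrow> ('a \<Rightarrow>\<^sub>L real)"
    and z :: 'a and z' :: "'a \<Rightarrow>\<^sub>L real"
  assumes nonzero: "\<exists>x::'a. x \<noteq> 0"
    and nonempty: "G \<noteq> {}"
    and cl: "closed_mf G" and mono: "monotone_mf G" and qd: "quasidense_mf G"
    and dir: "directed_preorder le"
    and inG: "\<And>b. (s b, s' b) \<in> G"
    and bdd: "\<exists>M. \<forall>b. norm (s b) \<le> M \<and> norm (s' b) \<le> M"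
  shows "((s \<longlongrightarrow> z) (net_filter le) \<and>
           (\<forall>x. ((\<lambda>b. blinfun_apply (s' b) x) \<longlongrightarrow> blinfun_apply z' x) (net_filter le))
           \<longrightarrow> (z, z') \<in> G)
       \<and> ((\<forall>\<phi>::'a \<Rightarrow>\<^sub>L real. ((\<lambda>b. blinfun_apply \<phi> (s b)) \<longlongrightarrow> blinfun_apply \<phi> z) (net_filter le)) \<and>
           (s' \<longlongrightarrow> z') (net_filter le)
           \<longrightarrow> (z, z') \<in> G)"
proof -
  obtain M where M: "\<And>b. norm (s b) \<le> M" "\<And>b. norm (s' b) \<le> M" using bdd by blast
  let ?F = "net_filter le"
  have nt: "?F \<noteq> bot" using net_nontriv[OF dir] .
  have clG: "closed G" using cl unfolding closed_mf_def .
  have key: "(z, z') \<in> G" if lim: "\<And>t t'. ((\<lambda>b. blinfun_apply (s' b - t') (s b - t))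
        \<longlongrightarrow> blinfun_apply (z' - t') (z - t)) ?F"
  proof (rule maximal_lemma[OF clG qd nonempty])
    fix t t' assume tG: "(t, t') \<in> G"
    have "0 \<le> blinfun_apply (z' - t') (z - t)"
    proof (rule tendsto_lowerbound[OF lim _ nt])
      show "\<forall>\<^sub>F b in ?F. 0 \<le> blinfun_apply (s' b - t') (s b - t)"
        using mono inG tG unfolding monotone_mf_def by (intro always_eventually allI) blast
    qed
    moreover have "blinfun_apply (t' - z') (t - z) = blinfun_apply (z' - t') (z - t)"
      by (simp add: blinfun.diff_left blinfun.diff_right)
    ultimately show "0 \<le> blinfun_apply (t' - z') (t - z)" by simp
  qed
  show ?thesis
  proof (intro conjI impI)
    assume A: "(s \<longlongrightarrow> z) ?F \<and> (\<forall>x. ((\<lambda>b. blinfun_apply (s' b) x) \<longlongrightarrow> blinfun_apply z' x) ?F)"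
    show "(z, z') \<in> G"
    proof (rule key)
      fix t t'
      have eq: "blinfun_apply (s' b - t') (s b - t) = blinfun_apply (s' b - t') (s b - z)
            + (blinfun_apply (s' b) (z - t) - blinfun_apply t' (z - t))" for b
        by (simp add: blinfun.diff_left blinfun.diff_right algebra_simps)
      have l1: "((\<lambda>b. blinfun_apply (s' b - t') (s b - z)) \<longlongrightarrow> 0) ?F"
      proof (rule Lim_null_comparison)
        show "\<forall>\<^sub>F b in ?F. norm (blinfun_apply (s' b - t') (s b - z)) \<le> (M + norm t') * norm (s b - z)"
        proof (rule always_eventually, rule allI)
          fix b
          have "norm (blinfun_apply (s' b - t') (s b - z)) \<le> norm (s' b - t') * norm (s b - z)"
            by (rule norm_blinfun)
          also have "\<dots> \<le> (M + norm t') * norm (s b - z)"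
            by (rule mult_right_mono) (use M(2)[of b] norm_triangle_ineq4[of "s' b" t'] in auto)
          finally show "norm (blinfun_apply (s' b - t') (s b - z)) \<le> (M + norm t') * norm (s b - z)" .
        qed
        have "((\<lambda>b. s b - z) \<longlongrightarrow> 0) ?F" using tendsto_diff[of s z ?F "\<lambda>_. z" z] A by simp
        hence "((\<lambda>b. norm (s b - z)) \<longlongrightarrow> 0) ?F" using tendsto_norm_zero by blast
        thus "((\<lambda>b. (M + norm t') * norm (s b - z)) \<longlongrightarrow> 0) ?F"
          using tendsto_mult_right_zero by blast
      qed
      have l2: "((\<lambda>b. blinfun_apply (s' b) (z - t) - blinfun_apply t' (z - t))
           \<longlongrightarrow> blinfun_apply z' (z - t) - blinfun_apply t' (z - t)) ?F"
        using A by (intro tendsto_diff tendsto_const) auto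
      have "((\<lambda>b. blinfun_apply (s' b - t') (s b - t)) \<longlongrightarrow>
            0 + (blinfun_apply z' (z - t) - blinfun_apply t' (z - t))) ?F"
        unfolding eq by (rule tendsto_add[OF l1 l2])
      thus "((\<lambda>b. blinfun_apply (s' b - t') (s b - t)) \<longlongrightarrow> blinfun_apply (z' - t') (z - t)) ?F"
        by (simp add: blinfun.diff_left)
    qed
  next
    assume A: "(\<forall>\<phi>::'a \<Rightarrow>\<^sub>L real. ((\<lambda>b. blinfun_apply \<phi> (s b)) \<longlongrightarrow> blinfun_apply \<phi> z) ?F) \<and>
           (s' \<longlongrightarrow> z') ?F"
    show "(z, z') \<in> G"
    proof (rule key)
      fix t t'
      have eq: "blinfun_apply (s' b - t') (s b - t) = blinfun_apply (s' b - z') (s b - t)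
            + (blinfun_apply (z' - t') (s b) - blinfun_apply (z' - t') t)" for b
        by (simp add: blinfun.diff_left blinfun.diff_right algebra_simps)
      have l1: "((\<lambda>b. blinfun_apply (s' b - z') (s b - t)) \<longlongrightarrow> 0) ?F"
      proof (rule Lim_null_comparison)
        show "\<forall>\<^sub>F b in ?F. norm (blinfun_apply (s' b - z') (s b - t)) \<le> norm (s' b - z') * (M + norm t)"
        proof (rule always_eventually, rule allI)
          fix b
          have "norm (blinfun_apply (s' b - z') (s b - t)) \<le> norm (s' b - z') * norm (s b - t)"
            by (rule norm_blinfun)
          also have "\<dots> \<le> norm (s' b - z') * (M + norm t)"
            by (rule mult_left_mono) (use M(1)[of b] norm_triangle_ineq4[of "s b" t] in auto)
          finally show "norm (blinfun_apply (s' b - z') (s b - t)) \<le> norm (s' b - z') * (M + norm t)" .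
        qed
        have "((\<lambda>b. s' b - z') \<longlongrightarrow> 0) ?F" using tendsto_diff[of s' z' ?F "\<lambda>_. z'" z'] A by simp
        hence "((\<lambda>b. norm (s' b - z')) \<longlongrightarrow> 0) ?F" using tendsto_norm_zero by blast
        thus "((\<lambda>b. norm (s' b - z') * (M + norm t)) \<longlongrightarrow> 0) ?F"
          using tendsto_mult_left_zero by blast
      qed
      have l2: "((\<lambda>b. blinfun_apply (z' - t') (s b) - blinfun_apply (z' - t') t)
           \<longlongrightarrow> blinfun_apply (z' - t') z - blinfun_apply (z' - t') t) ?F"
        using A by (intro tendsto_diff tendsto_const) auto
      have "((\<lambda>b. blinfun_apply (s' b - t') (s b - t)) \<longlongrightarrow>
            0 + (blinfun_apply (z' - t') z - blinfun_apply (z' - t') t)) ?F"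
        unfolding eq by (rule tendsto_add[OF l1 l2])
      thus "((\<lambda>b. blinfun_apply (s' b - t') (s b - t)) \<longlongrightarrow> blinfun_apply (z' - t') (z - t)) ?F"
        by (simp add: blinfun.diff_right)
    qed
  qed
qed

end
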